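(* If $G$ is a (not necessarily connected) graph of order $n\ge 4$, then $7\le \gamma_{qtR}(G)+\gamma_{qtR}(\overline{G})\le n+5$. Moreover: (i) $\gamma_{qtR}(G)+\gamma_{qtR}(\overline{G})=7$ if and only if $G$ is one of $K_4$, $\overline{K_4}$, $K_4-e$, $\overline{K_4-e}$, or $G\in\mathcal{F}_1\cup\mathcal{F}'_1$; (ii) $\gamma_{qtR}(G)+\gamma_{qtR}(\overline{G})=n+5$ if and only if $G$ is the cycle $C_5$.
   Context: All graphs are finite, simple and undirected; $\overline{G}$ denotes the complement of $G$, and $K_4-e$ is $K_4$ with one edge removed. $\mathcal{F}_1$ is the family of all graphs of order $n$ that have exactly one vertex of degree $n-1$ and at least one vertex of degree one; $\mathcal{F}'_1$ is the family of complements of graphs in $\mathcal{F}_1$. For $f:V(G)\to\{0,1,2\}$ write $V_i=\{v:f(v)=i\}$; weight $\omega(f)=|V_1|+2|V_2|$. A quasi-total Roman dominating function (QTRDF) is an $f$ such that every vertex labeled $0$ is adjacent to a vertex labeled $2$, and every vertex isolated in the subgraph induced by $V_1\cup V_2$ has label $1$; $\gamma_{qtR}(G)$ is the minimum weight of a QTRDF. *)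

theory Defs
  imports Main
begin

definition graph :: "'a set \<Rightarrow> ('a \<Rightarrow> 'a \<Rightarrow> bool) \<Rightarrow> bool" where
  "graph V E \<longleftrightarrow> finite V \<and> (\<forall>u v. E u v \<longrightarrow> u \<in> V \<and> v \<in> V \<and> u \<noteq> v \<and> E v u)"

definition compl :: "'a set \<Rightarrow> ('a \<Rightarrow> 'a \<Rightarrow> bool) \<Rightarrow> 'a \<Rightarrow> 'a \<Rightarrow> bool" where
  "compl V E u v \<longleftrightarrow> u \<in> V \<and> v \<in> V \<and> u \<noteq> v \<and> \<not> E u v"

definition degree :: "'a set \<Rightarrow> ('a \<Rightarrow> 'a \<Rightarrow> bool) \<Rightarrow> 'a \<Rightarrow> nat" where
  "degree V E v = card {u \<in> V. E v u}"

definition graph_iso :: "'a set \<Rightarrow> ('a \<Rightarrow> 'a \<Rightarrow> bool) \<Rightarrow> 'b set \<Rightarrow> ('b \<Rightarrow> 'b \<Rightarrow> bool) \<Rightarrow> bool" where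
  "graph_iso V E W F \<longleftrightarrow> (\<exists>h. bij_betw h V W \<and> (\<forall>u\<in>V. \<forall>v\<in>V. E u v \<longleftrightarrow> F (h u) (h v)))"

definition K4 :: "nat \<Rightarrow> nat \<Rightarrow> bool" where
  "K4 u v \<longleftrightarrow> u \<in> {0..<4} \<and> v \<in> {0..<4} \<and> u \<noteq> v"

definition K4_minus_e :: "nat \<Rightarrow> nat \<Rightarrow> bool" where
  "K4_minus_e u v \<longleftrightarrow> K4 u v \<and> {u, v} \<noteq> {0, 1}"

definition C5 :: "nat \<Rightarrow> nat \<Rightarrow> bool" where
  "C5 u v \<longleftrightarrow> u \<in> {0..<5} \<and> v \<in> {0..<5} \<and> ((u + 1) mod 5 = v \<or> (v + 1) mod 5 = u)"

definition in_F1 :: "'a set \<Rightarrow> ('a \<Rightarrow> 'a \<Rightarrow> bool) \<Rightarrow> bool" where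
  "in_F1 V E \<longleftrightarrow> card {v \<in> V. degree V E v = card V - 1} = 1 \<and> (\<exists>v\<in>V. degree V E v = 1)"

definition in_F1' :: "'a set \<Rightarrow> ('a \<Rightarrow> 'a \<Rightarrow> bool) \<Rightarrow> bool" where
  "in_F1' V E \<longleftrightarrow> in_F1 V (compl V E)"

definition qtrdf :: "'a set \<Rightarrow> ('a \<Rightarrow> 'a \<Rightarrow> bool) \<Rightarrow> ('a \<Rightarrow> nat) \<Rightarrow> bool" where
  "qtrdf V E f \<longleftrightarrow>
     (\<forall>v\<in>V. f v \<le> 2) \<and>
     (\<forall>v\<in>V. f v = 0 \<longrightarrow> (\<exists>u\<in>V. E v u \<and> f u = 2)) \<and>
     (\<forall>v\<in>V. f v \<ge> 1 \<and> \<not> (\<exists>u\<in>V. E v u \<and> f u \<ge> 1) \<longrightarrow> f v = 1)"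

text \<open>Weight |V1| + 2|V2| equals the sum of labels.\<close>
definition weight :: "'a set \<Rightarrow> ('a \<Rightarrow> nat) \<Rightarrow> nat" where
  "weight V f = (\<Sum>v\<in>V. f v)"

definition gamma_qtR :: "'a set \<Rightarrow> ('a \<Rightarrow> 'a \<Rightarrow> bool) \<Rightarrow> nat" where
  "gamma_qtR V E = Inf {weight V f | f. qtrdf V E f}"

end

theory Submission
  imports Defs
begin
lemma graphD: "graph V E \<Longrightarrow> E u v \<Longrightarrow> u \<in> V \<and> v \<in> V \<and> u \<noteq> v \<and> E v u"
  unfolding graph_def by blast

lemma graph_fin: "graph V E \<Longrightarrow> finite V" unfolding graph_def by blast

lemma graph_compl: "graph V E \<Longrightarrow> graph V (compl V E)"
  unfolding graph_def compl_def by blast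

lemma compl_compl: "graph V E \<Longrightarrow> compl V (compl V E) = E"
  unfolding graph_def compl_def by (intro ext) blast

lemma gamma_le: "qtrdf V E f \<Longrightarrow> gamma_qtR V E \<le> weight V f"
  unfolding gamma_qtR_def by (rule cInf_lower) auto

lemma gamma_attained: "\<exists>f. qtrdf V E f \<and> gamma_qtR V E = weight V f"
proof -
  have "qtrdf V E (\<lambda>_. 1)" unfolding qtrdf_def by auto
  hence "{weight V f | f. qtrdf V E f} \<noteq> {}" by blast
  from Inf_nat_def1[OF this] show ?thesis unfolding gamma_qtR_def by blast
qed

lemma gamma_le_n: "gamma_qtR V E \<le> card V"
proof -
  have "qtrdf V E (\<lambda>_. 1)" unfolding qtrdf_def by auto
  from gamma_le[OF this] show ?thesis by (simp add: weight_def)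
qed

lemma sum_sub: "finite V \<Longrightarrow> A \<subseteq> V \<Longrightarrow> sum (f::'a\<Rightarrow>nat) A \<le> weight V f"
  unfolding weight_def by (rule sum_mono2) auto

lemma degree_compl:
  assumes g: "graph V E" and v: "v \<in> V"
  shows "degree V (compl V E) v + degree V E v = card V - 1"
proof -
  have fin: "finite V" using g graph_fin by blast
  have s: "{u\<in>V. E v u} \<subseteq> V - {v}" using g graphD by fastforce
  have "{u\<in>V. compl V E v u} = (V - {v}) - {u\<in>V. E v u}" unfolding compl_def using v by blast
  hence "degree V (compl V E) v = card (V - {v}) - card {u\<in>V. E v u}"
    unfolding degree_def using card_Diff_subset[OF finite_subset[OF s] s] fin by (simp add: finite_subset[OF s])
  moreover have "card {u\<in>V. E v u} \<le> card (V - {v})" using card_mono[OF _ s] fin by simp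
  moreover have "card (V - {v}) = card V - 1" using v fin by simp
  ultimately show ?thesis unfolding degree_def by simp
qed

lemma qD:
  assumes "qtrdf V E f" "v \<in> V"
  shows "f v \<le> 2" "f v = 0 \<Longrightarrow> \<exists>u\<in>V. E v u \<and> f u = 2"
        "f v = 2 \<Longrightarrow> \<exists>u\<in>V. E v u \<and> f u \<ge> 1"
proof -
  show "f v \<le> 2" using assms unfolding qtrdf_def by auto
  show "f v = 0 \<Longrightarrow> \<exists>u\<in>V. E v u \<and> f u = 2" using assms unfolding qtrdf_def by auto
  show "f v = 2 \<Longrightarrow> \<exists>u\<in>V. E v u \<and> f u \<ge> 1" using assms unfolding qtrdf_def by fastforce
qed

lemma sum2: "finite V \<Longrightarrow> a \<in> V \<Longrightarrow> b \<in> V \<Longrightarrow> a \<noteq> b \<Longrightarrow> f a + f b \<le> weight V (f::'a\<Rightarrow>nat)"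
  using sum_sub[of V "{a,b}" f] by simp

lemma sum3: "finite V \<Longrightarrow> a \<in> V \<Longrightarrow> b \<in> V \<Longrightarrow> c \<in> V \<Longrightarrow> a \<noteq> b \<Longrightarrow> a \<noteq> c \<Longrightarrow> b \<noteq> c
   \<Longrightarrow> f a + f b + f c \<le> weight V (f::'a\<Rightarrow>nat)"
  using sum_sub[of V "{a,b,c}" f] by simp

lemma sum4: "finite V \<Longrightarrow> a \<in> V \<Longrightarrow> b \<in> V \<Longrightarrow> c \<in> V \<Longrightarrow> d \<in> V \<Longrightarrow> a \<noteq> b \<Longrightarrow> a \<noteq> c \<Longrightarrow> b \<noteq> c
   \<Longrightarrow> a \<noteq> d \<Longrightarrow> b \<noteq> d \<Longrightarrow> c \<noteq> d
   \<Longrightarrow> f a + f b + f c + f d \<le> weight V (f::'a\<Rightarrow>nat)"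
  using sum_sub[of V "{a,b,c,d}" f] by simp

lemma all_ones:
  assumes "finite V" "\<forall>v\<in>V. f v \<ge> (1::nat)"
  shows "card V \<le> weight V f"
proof -
  have "(\<Sum>v\<in>V. 1) \<le> (\<Sum>v\<in>V. f v)" by (rule sum_mono) (use assms in auto)
  thus ?thesis by (simp add: weight_def)
qed

lemma no_two_pos:
  assumes "qtrdf V E f" "\<forall>v\<in>V. f v \<noteq> 2"
  shows "\<forall>v\<in>V. f v \<ge> 1"
  using assms qD(2)[OF assms(1)] by (metis less_one not_le)

lemma L_ge3:
  assumes g: "graph V E" and c: "card V \<ge> 3" and q: "qtrdf V E f"
  shows "weight V f \<ge> 3"
proof (cases "\<exists>x\<in>V. f x = 2")
  case True
  then obtain x where x: "x \<in> V" "f x = 2" by blast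
  then obtain u where u: "u \<in> V" "E x u" "f u \<ge> 1" using qD(3)[OF q] by blast
  have "u \<noteq> x" using g u graphD by metis
  with sum2[OF graph_fin[OF g] x(1) u(1), of f] x u show ?thesis by simp
next
  case False
  with no_two_pos[OF q] all_ones[OF graph_fin[OF g]] c show ?thesis by fastforce
qed

lemma L_3univ:
  assumes g: "graph V E" and c: "card V \<ge> 4" and q: "qtrdf V E f" and w: "weight V f \<le> 3"
  shows "\<exists>x\<in>V. degree V E x = card V - 1"
proof (cases "\<exists>x\<in>V. f x = 2")
  case True
  have fin: "finite V" using g graph_fin by blast
  then obtain x where x: "x \<in> V" "f x = 2" using True by blast
  then obtain u where u: "u \<in> V" "E x u" "f u \<ge> 1" using qD(3)[OF q] by blast
  have ux: "u \<noteq> x" using g u graphD by metis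
  have zero: "f y = 0" if "y \<in> V" "y \<noteq> x" "y \<noteq> u" for y
    using sum3[OF fin x(1) u(1) that(1), of f] ux that x u w by auto
  have fu: "f u = 1" using sum2[OF fin x(1) u(1) ux[symmetric], of f] x u w by auto
  have adj: "E x y" if yy: "y \<in> V" "y \<noteq> x" for y
  proof (cases "y = u")
    case True thus ?thesis using u by simp
  next
    case False
    have "f y = 0" using zero yy False by blast
    then obtain z where z: "z \<in> V" "E y z" "f z = 2" using qD(2)[OF q yy(1)] by blast
    have "z = x" using zero[OF z(1)] z fu by (cases "z = u") auto
    thus ?thesis using z g graphD by metis
  qed
  have "{y\<in>V. E x y} = V - {x}" using adj g graphD by fastforce
  thus ?thesis using x fin unfolding degree_def by (intro bexI[of _ x]) auto
next
  case False
  with no_two_pos[OF q] all_ones[OF graph_fin[OF g]] c w show ?thesis by fastforce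
qed

lemma iso_one:
  assumes q: "qtrdf V E f" and w: "w \<in> V" "\<forall>u. \<not> E w u"
  shows "f w = 1"
proof -
  have "f w \<noteq> 0" using qD(2)[OF q w(1)] w(2) by blast
  moreover have "f w \<noteq> 2" using qD(3)[OF q w(1)] w(2) by blast
  ultimately show ?thesis using qD(1)[OF q w(1)] by linarith
qed

lemma L_iso4:
  assumes g: "graph V E" and c: "card V \<ge> 4" and q: "qtrdf V E f"
    and w: "w \<in> V" "\<forall>u. \<not> E w u"
  shows "weight V f \<ge> 4"
proof (cases "\<exists>x\<in>V. f x = 2")
  case True
  have fin: "finite V" using g graph_fin by blast
  then obtain x where x: "x \<in> V" "f x = 2" using True by blast
  then obtain u where u: "u \<in> V" "E x u" "f u \<ge> 1" using qD(3)[OF q] by blast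
  have "u \<noteq> x" "x \<noteq> w" "u \<noteq> w" using g u graphD w by metis+
  with sum3[OF fin x(1) u(1) w(1), of f] x u iso_one[OF q w] show ?thesis by simp
next
  case False
  with no_two_pos[OF q] all_ones[OF graph_fin[OF g]] c show ?thesis by fastforce
qed

lemma L_two_iso:
  assumes g: "graph V E" and c: "card V \<ge> 5" and q: "qtrdf V E f"
    and w: "w \<in> V" "\<forall>u. \<not> E w u" and w2: "w2 \<in> V" "\<forall>u. \<not> E w2 u" "w \<noteq> w2"
  shows "weight V f \<ge> 5"
proof (cases "\<exists>x\<in>V. f x = 2")
  case True
  have fin: "finite V" using g graph_fin by blast
  then obtain x where x: "x \<in> V" "f x = 2" using True by blast
  then obtain u where u: "u \<in> V" "E x u" "f u \<ge> 1" using qD(3)[OF q] by blast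
  have "u \<noteq> x" "x \<noteq> w" "u \<noteq> w" "x \<noteq> w2" "u \<noteq> w2" using g u graphD w w2 by metis+
  with sum4[OF fin x(1) u(1) w(1) w2(1), of f] x u iso_one[OF q w] iso_one[OF q w2(1,2)] w2(3)
  show ?thesis by simp
next
  case False
  with no_two_pos[OF q] all_ones[OF graph_fin[OF g]] c show ?thesis by fastforce
qed

lemma L_w4:
  assumes g: "graph V E" and c: "card V \<ge> 5" and q: "qtrdf V E f" and wt: "weight V f \<le> 4"
    and w: "w \<in> V" "\<forall>u. \<not> E w u"
  shows "\<exists>x\<in>V. degree V E x = card V - 2"
proof (cases "\<exists>x\<in>V. f x = 2")
  case True
  have fin: "finite V" using g graph_fin by blast
  then obtain x where x: "x \<in> V" "f x = 2" using True by blast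
  then obtain u where u: "u \<in> V" "E x u" "f u \<ge> 1" using qD(3)[OF q] by blast
  have ne: "u \<noteq> x" "x \<noteq> w" "u \<noteq> w" using g u graphD w by metis+
  have fw: "f w = 1" using iso_one[OF q w] .
  have zero: "f y = 0" if "y \<in> V" "y \<noteq> x" "y \<noteq> u" "y \<noteq> w" for y
    using sum4[OF fin x(1) u(1) w(1) that(1), of f] ne that x u wt fw by auto
  have fu: "f u = 1" using sum3[OF fin x(1) u(1) w(1), of f] ne x u wt fw by auto
  have adj: "E x y" if yy: "y \<in> V" "y \<noteq> x" "y \<noteq> w" for y
  proof (cases "y = u")
    case True thus ?thesis using u by simp
  next
    case False
    have "f y = 0" using zero yy False by blast
    then obtain z where z: "z \<in> V" "E y z" "f z = 2" using qD(2)[OF q yy(1)] by blast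
    have "z \<noteq> w" using z w g graphD by metis
    hence "z = x" using zero[OF z(1)] z fu by (cases "z = u") auto
    thus ?thesis using z g graphD by metis
  qed
  have "{y\<in>V. E x y} = V - {x, w}" using adj g graphD w by fastforce
  thus ?thesis using x fin w ne unfolding degree_def by (intro bexI[of _ x]) auto
next
  case False
  with no_two_pos[OF q] all_ones[OF graph_fin[OF g]] c wt show ?thesis by fastforce
qed

lemma L_univ_le3:
  assumes g: "graph V E" and x: "x \<in> V" "degree V E x = card V - 1" and c: "card V \<ge> 2"
  shows "gamma_qtR V E \<le> 3"
proof -
  have fin: "finite V" using g graph_fin by blast
  have s: "{y\<in>V. E x y} \<subseteq> V - {x}" using g graphD by fastforce
  have "card {y\<in>V. E x y} = card (V - {x})" using x fin unfolding degree_def by simp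
  hence N: "{y\<in>V. E x y} = V - {x}" using card_subset_eq[OF _ s] fin by blast
  have "card (V - {x}) \<ge> 1" using c fin x by simp
  hence "V - {x} \<noteq> {}" by (metis card.empty not_one_le_zero)
  then obtain u where u: "u \<in> V" "u \<noteq> x" by blast
  define f where "f = (\<lambda>y. if y = x then 2 else if y = u then 1 else (0::nat))"
  have Exu: "E x u" using N u by blast
  have q: "qtrdf V E f" unfolding qtrdf_def
  proof (intro conjI ballI impI)
    fix v assume "v \<in> V" thus "f v \<le> 2" unfolding f_def by auto
  next
    fix v assume v: "v \<in> V" "f v = 0"
    hence "v \<noteq> x" unfolding f_def by auto
    hence "E x v" using N v by blast
    hence "E v x" using g graphD by metis
    thus "\<exists>u\<in>V. E v u \<and> f u = 2" using x unfolding f_def by auto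
  next
    fix v assume v: "v \<in> V" "1 \<le> f v \<and> \<not> (\<exists>u\<in>V. E v u \<and> 1 \<le> f u)"
    have "v \<noteq> x" using v Exu u by (auto simp: f_def)
    hence "f v \<le> 1" unfolding f_def by auto
    thus "f v = 1" using v(2) by linarith
  qed
  have "weight V f = sum f {x, u} + sum f (V - {x,u})"
    unfolding weight_def using fin u x sum.subset_diff[of "{x,u}" V f] by (simp add: add.commute)
  also have "sum f (V - {x,u}) = 0" unfolding f_def by (intro sum.neutral) auto
  finally have "weight V f = 3" using u unfolding f_def by simp
  thus ?thesis using gamma_le[OF q] by simp
qed

lemma L_deg1_le4:
  assumes g: "graph V E" and x: "x \<in> V" and w: "w \<in> V" "x \<noteq> w"
    and N: "{y\<in>V. E x y} = V - {x, w}" and c: "card V \<ge> 3"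
  shows "gamma_qtR V E \<le> 4"
proof -
  have fin: "finite V" using g graph_fin by blast
  obtain u where u: "u \<in> V" "u \<noteq> x" "u \<noteq> w"
  proof -
    have "card (V - {x, w}) \<ge> 1" using c fin x w by (simp add: card_Diff_subset)
    hence "V - {x,w} \<noteq> {}" by (metis card.empty not_one_le_zero)
    then obtain u where "u \<in> V - {x,w}" by blast
    thus ?thesis using that by blast
  qed
  define f where "f = (\<lambda>y. if y = x then 2 else if y = u then 1 else if y = w then 1 else (0::nat))"
  have Exu: "E x u" using N u by blast
  have q: "qtrdf V E f" unfolding qtrdf_def
  proof (intro conjI ballI impI)
    fix v assume "v \<in> V" thus "f v \<le> 2" unfolding f_def by auto
  next
    fix v assume v: "v \<in> V" "f v = 0"
    hence "v \<noteq> x" "v \<noteq> w" unfolding f_def by (auto split: if_splits)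
    hence "E x v" using N v by blast
    hence "E v x" using g graphD by metis
    thus "\<exists>u\<in>V. E v u \<and> f u = 2" using x unfolding f_def by auto
  next
    fix v assume v: "v \<in> V" "1 \<le> f v \<and> \<not> (\<exists>u\<in>V. E v u \<and> 1 \<le> f u)"
    have "v \<noteq> x" using v Exu u by (auto simp: f_def)
    hence "f v \<le> 1" unfolding f_def by auto
    thus "f v = 1" using v(2) by linarith
  qed
  have "weight V f = sum f {x, u, w} + sum f (V - {x,u,w})"
    unfolding weight_def using fin u x w sum.subset_diff[of "{x,u,w}" V f] by (simp add: add.commute)
  also have "sum f (V - {x,u,w}) = 0" unfolding f_def by (intro sum.neutral) auto
  finally have "weight V f = 4" using u w unfolding f_def by simp
  thus ?thesis using gamma_le[OF q] by simp
qed

lemma sum_ind: "finite A \<Longrightarrow> (\<Sum>y\<in>A. if P y then 0 else (1::nat)) = card {y\<in>A. \<not> P y}"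
proof -
  have "A \<inter> - Collect P = {y\<in>A. \<not> P y}" by blast
  thus "finite A \<Longrightarrow> ?thesis" by (simp add: sum.If_cases)
qed

lemma split2: "finite V \<Longrightarrow> a \<in> V \<Longrightarrow> b \<in> V \<Longrightarrow>
   weight V f = sum f {a,b} + sum f (V - {a,b})"
  unfolding weight_def using sum.subset_diff[of "{a,b}" V f] by (simp add: add.commute)

lemma L_edge:
  assumes g: "graph V E" and e: "E v x"
  shows "gamma_qtR V E \<le> 4 + card {y\<in>V. y \<noteq> v \<and> y \<noteq> x \<and> \<not> E v y \<and> \<not> E x y}"
proof -
  have fin: "finite V" using g graph_fin by blast
  have vx: "v \<in> V" "x \<in> V" "v \<noteq> x" "E x v" using g e graphD by metis+
  define f where "f = (\<lambda>y. if y = v then 2 else if y = x then 2 else if E v y \<or> E x y then 0 else (1::nat))"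
  have q: "qtrdf V E f" unfolding qtrdf_def
  proof (intro conjI ballI impI)
    fix y assume "y \<in> V" thus "f y \<le> 2" unfolding f_def by auto
  next
    fix y assume y: "y \<in> V" "f y = 0"
    hence "y \<noteq> v" "y \<noteq> x" "E v y \<or> E x y" unfolding f_def by (auto split: if_splits)
    hence "E y v \<or> E y x" using graphD[OF g, of v y] graphD[OF g, of x y] by blast
    thus "\<exists>u\<in>V. E y u \<and> f u = 2" using vx unfolding f_def by auto
  next
    fix y assume y: "y \<in> V" "1 \<le> f y \<and> \<not> (\<exists>u\<in>V. E y u \<and> 1 \<le> f u)"
    have fvx: "f v = 2" "f x = 2" unfolding f_def by auto
    have "y \<noteq> x" using y vx fvx by force
    moreover have "y \<noteq> v" using y vx fvx e by force
    ultimately have "f y \<le> 1" unfolding f_def by auto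
    thus "f y = 1" using y(2) by linarith
  qed
  have "sum f (V - {v,x}) = (\<Sum>y\<in>V - {v,x}. if E v y \<or> E x y then 0 else 1)"
    unfolding f_def by (intro sum.cong) auto
  also have "\<dots> = card {y\<in>V - {v,x}. \<not> (E v y \<or> E x y)}" using fin by (simp add: sum_ind)
  also have "{y\<in>V - {v,x}. \<not> (E v y \<or> E x y)} = {y\<in>V. y \<noteq> v \<and> y \<noteq> x \<and> \<not> E v y \<and> \<not> E x y}" by blast
  finally have "weight V f = 4 + card {y\<in>V. y \<noteq> v \<and> y \<noteq> x \<and> \<not> E v y \<and> \<not> E x y}"
    using split2[OF fin vx(1,2), of f] vx unfolding f_def by simp
  thus ?thesis using gamma_le[OF q] by simp
qed

lemma L_U2:
  assumes g: "graph V E" and v: "v \<in> V" and d: "degree V E v \<ge> 1"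
  shows "gamma_qtR V E + degree V E v \<le> card V + 2"
proof -
  have fin: "finite V" using g graph_fin by blast
  define N where "N = {y\<in>V. E v y}"
  have "\<not> E v v" using g graphD by metis
  hence NV: "N \<subseteq> V" "v \<notin> N" unfolding N_def by auto
  have cN: "card N = degree V E v" unfolding N_def degree_def by simp
  hence "N \<noteq> {}" using d by auto
  then obtain u where u: "u \<in> N" by blast
  have uv0: "u \<in> V" "E v u" using u unfolding N_def by auto
  have uv: "u \<in> V" "E v u" "u \<noteq> v" "E u v" using uv0 graphD[OF g uv0(2)] by auto
  define f where "f = (\<lambda>y. if y = v then 2 else if y = u then 1 else if E v y then 0 else (1::nat))"
  have q: "qtrdf V E f" unfolding qtrdf_def
  proof (intro conjI ballI impI)
    fix y assume "y \<in> V" thus "f y \<le> 2" unfolding f_def by auto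
  next
    fix y assume y: "y \<in> V" "f y = 0"
    hence "y \<noteq> v" "E v y" unfolding f_def by (auto split: if_splits)
    hence "E y v" using g graphD by metis
    thus "\<exists>u\<in>V. E y u \<and> f u = 2" using v unfolding f_def by auto
  next
    fix y assume y: "y \<in> V" "1 \<le> f y \<and> \<not> (\<exists>u\<in>V. E y u \<and> 1 \<le> f u)"
    have "y \<noteq> v" using y uv by (auto simp: f_def)
    hence "f y \<le> 1" unfolding f_def by auto
    thus "f y = 1" using y(2) by linarith
  qed
  have "sum f (V - {v,u}) = (\<Sum>y\<in>V - {v,u}. if E v y then 0 else 1)"
    unfolding f_def by (intro sum.cong) auto
  also have "\<dots> = card {y\<in>V - {v,u}. \<not> E v y}" using fin by (simp add: sum_ind)
  also have "{y\<in>V - {v,u}. \<not> E v y} = (V - {v}) - N" using uv u unfolding N_def by blast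
  also have "card ((V - {v}) - N) = card (V - {v}) - card N"
    using NV fin by (intro card_Diff_subset) (auto intro: finite_subset)
  also have "card (V - {v}) = card V - 1" using v fin by simp
  finally have "weight V f = 3 + (card V - 1 - card N)"
    using split2[OF fin v uv(1), of f] uv unfolding f_def by simp
  moreover have "card N \<le> card V - 1" using card_mono[of "V - {v}" N] NV fin v by auto
  ultimately show ?thesis using gamma_le[OF q] cN d by simp
qed

lemma L_low_n:
  assumes g: "graph V E" and dg: "\<forall>v\<in>V. degree V E v \<le> 2" and q: "qtrdf V E f"
  shows "card V \<le> weight V f"
proof -
  have fin: "finite V" using g graph_fin by blast
  define Z where "Z = {v\<in>V. f v = 0}"
  define T where "T = {v\<in>V. f v = 2}"
  define P where "P = {v\<in>V. f v \<ge> 1}"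
  define S where "S = (\<lambda>t. {y\<in>V. E t y \<and> f y = 0})"
  have w: "weight V f = card P + card T"
  proof -
    have "weight V f = (\<Sum>v\<in>V. (if f v \<ge> 1 then 1 else 0) + (if f v = 2 then 1 else (0::nat)))"
      unfolding weight_def
    proof (intro sum.cong refl)
      fix v assume "v \<in> V" hence "f v \<le> 2" using qD(1)[OF q] by blast
      thus "f v = (if f v \<ge> 1 then 1 else 0) + (if f v = 2 then 1 else 0)" by auto
    qed
    also have "\<dots> = card P + card T" unfolding P_def T_def using fin
      by (simp add: sum.distrib sum.If_cases Int_def)
    finally show ?thesis .
  qed
  have cV: "card V = card Z + card P"
  proof -
    have "V = Z \<union> P" "Z \<inter> P = {}" unfolding Z_def P_def by auto
    thus ?thesis using fin by (metis card_Un_disjoint finite_Un)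
  qed
  have sub: "Z \<subseteq> (\<Union>t\<in>T. S t)"
  proof
    fix z assume z: "z \<in> Z"
    then obtain t where t: "t \<in> V" "E z t" "f t = 2" using qD(2)[OF q] unfolding Z_def by blast
    have "E t z" using graphD[OF g t(2)] by blast
    thus "z \<in> (\<Union>t\<in>T. S t)" using t z unfolding T_def S_def Z_def by blast
  qed
  have S1: "card (S t) \<le> 1" if t: "t \<in> T" for t
  proof -
    obtain u where u: "u \<in> V" "E t u" "f u \<ge> 1" using qD(3)[OF q] t unfolding T_def by blast
    have tV: "t \<in> V" using t unfolding T_def by blast
    have "S t \<subseteq> {y\<in>V. E t y} - {u}" using u unfolding S_def by auto
    hence "card (S t) \<le> card ({y\<in>V. E t y} - {u})" using fin by (intro card_mono) auto
    also have "\<dots> = card {y\<in>V. E t y} - 1" using u fin by simp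
    also have "\<dots> \<le> 1" using dg tV unfolding degree_def by fastforce
    finally show ?thesis .
  qed
  have "(\<Union>t\<in>T. S t) \<subseteq> V" unfolding S_def by auto
  hence "finite (\<Union>t\<in>T. S t)" using fin finite_subset by blast
  hence "card Z \<le> card (\<Union>t\<in>T. S t)" using sub by (intro card_mono)
  also have "\<dots> \<le> (\<Sum>t\<in>T. card (S t))" by (rule card_UN_le) (use fin in \<open>auto simp: T_def\<close>)
  also have "\<dots> \<le> (\<Sum>t\<in>T. 1)" using S1 by (intro sum_mono) auto
  finally have "card Z \<le> card T" by simp
  thus ?thesis using w cV by simp
qed

lemma L_low_gamma:
  assumes g: "graph V E" and dg: "\<forall>v\<in>V. degree V E v \<le> 2"
  shows "card V \<le> gamma_qtR V E"
  using gamma_attained[of V E] L_low_n[OF g dg] by metis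

lemma iso_from_list:
  assumes d: "distinct xs" and s: "set xs = V"
    and e: "\<And>i j. i < length xs \<Longrightarrow> j < length xs \<Longrightarrow> E (xs!i) (xs!j) \<longleftrightarrow> F i j"
  shows "graph_iso V E {0..<length xs} F"
proof -
  have b: "bij_betw ((!) xs) {0..<length xs} V" using bij_betw_nth[OF d _ s[symmetric]] by (simp add: atLeast0LessThan)
  define h where "h = inv_into {0..<length xs} ((!) xs)"
  have hb: "bij_betw h V {0..<length xs}" unfolding h_def by (rule bij_betw_inv_into[OF b])
  have hx: "xs ! (h u) = u" if "u \<in> V" for u
    unfolding h_def using b that by (meson bij_betw_inv_into_right)
  have hl: "h u < length xs" if "u \<in> V" for u using hb that bij_betwE by fastforce
  have "E u v \<longleftrightarrow> F (h u) (h v)" if "u \<in> V" "v \<in> V" for u v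
    using e[OF hl[OF that(1)] hl[OF that(2)]] hx[OF that(1)] hx[OF that(2)] by simp
  thus ?thesis unfolding graph_iso_def using hb by blast
qed

lemma iso_card: "graph_iso V E W F \<Longrightarrow> card V = card W"
  unfolding graph_iso_def using bij_betw_same_card by blast

lemma iso_degree:
  assumes "graph_iso V E W F"
  shows "\<exists>h. bij_betw h V W \<and> (\<forall>v\<in>V. degree V E v = degree W F (h v))"
proof -
  obtain h where h: "bij_betw h V W" "\<forall>u\<in>V. \<forall>v\<in>V. E u v \<longleftrightarrow> F (h u) (h v)"
    using assms unfolding graph_iso_def by blast
  have "degree V E v = degree W F (h v)" if v: "v \<in> V" for v
  proof -
    have "h ` {u\<in>V. E v u} = {w\<in>W. F (h v) w}"
    proof
      show "h ` {u\<in>V. E v u} \<subseteq> {w\<in>W. F (h v) w}" using h v bij_betwE by fastforce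
      show "{w\<in>W. F (h v) w} \<subseteq> h ` {u\<in>V. E v u}"
      proof
        fix w assume w: "w \<in> {w\<in>W. F (h v) w}"
        have "h ` V = W" using h(1) unfolding bij_betw_def by blast
        then obtain u where u: "u \<in> V" "w = h u" using w by blast
        thus "w \<in> h ` {u\<in>V. E v u}" using w h(2) v by auto
      qed
    qed
    moreover have "inj_on h {u\<in>V. E v u}"
    proof (rule inj_on_subset)
      show "inj_on h V" using h(1) unfolding bij_betw_def by blast
    qed blast
    ultimately show ?thesis unfolding degree_def by (metis card_image)
  qed
  thus ?thesis using h by blast
qed

lemma iso_has_deg:
  assumes "graph_iso V E W F" "w \<in> W" "degree W F w = k"
  shows "\<exists>v\<in>V. degree V E v = k"
proof -
  obtain h where h: "bij_betw h V W" "\<forall>v\<in>V. degree V E v = degree W F (h v)" using iso_degree[OF assms(1)] by blast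
  obtain v where "v \<in> V" "h v = w" using h(1) assms(2) by (metis bij_betw_iff_bijections)
  thus ?thesis using h assms by metis
qed

lemma iso_all_deg:
  assumes "graph_iso V E W F" "\<forall>w\<in>W. degree W F w = k"
  shows "\<forall>v\<in>V. degree V E v = k"
proof -
  obtain h where h: "bij_betw h V W" "\<forall>v\<in>V. degree V E v = degree W F (h v)" using iso_degree[OF assms(1)] by blast
  thus ?thesis using assms(2) bij_betwE by metis
qed

lemma set4: "{0..<4::nat} = set [0,1,2,3]" by auto
lemma set5: "{0..<5::nat} = set [0,1,2,3,4]" by auto

lemma deg_K4: "degree {0..<4} K4 0 = 3"
  unfolding degree_def set4 set_filter[symmetric] by (simp add: K4_def)

lemma deg_K4e: "degree {0..<4} K4_minus_e 2 = 3"
  unfolding degree_def set4 set_filter[symmetric] by (simp add: K4_minus_e_def K4_def doubleton_eq_iff)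

lemma deg_cK4: "degree {0..<4} (compl {0..<4} K4) 0 = 0"
  unfolding degree_def set4 set_filter[symmetric] by (simp add: compl_def K4_def)

lemma deg_cK4e: "degree {0..<4} (compl {0..<4} K4_minus_e) 2 = 0"
  unfolding degree_def set4 set_filter[symmetric] by (simp add: compl_def K4_minus_e_def K4_def doubleton_eq_iff)

lemma deg_C5: "\<forall>w\<in>{0..<5}. degree {0..<5} C5 w = 2"
  unfolding degree_def set5 set_filter[symmetric] by (simp add: C5_def)

lemma double_count:
  assumes "finite A" "finite B" "\<And>x y. R x y \<longleftrightarrow> R y x"
  shows "(\<Sum>x\<in>A. card {y\<in>B. R x y}) = (\<Sum>y\<in>B. card {x\<in>A. R y x})"
proof -
  have "(\<Sum>x\<in>A. card {y\<in>B. R x y}) = (\<Sum>x\<in>A. \<Sum>y\<in>B. if R x y then 1 else (0::nat))"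
    using assms(2) by (simp add: sum.If_cases Int_def)
  also have "\<dots> = (\<Sum>y\<in>B. \<Sum>x\<in>A. if R x y then 1 else (0::nat))" by (rule sum.swap)
  also have "\<dots> = (\<Sum>y\<in>B. card {x\<in>A. R y x})"
    using assms(1) by (simp add: sum.If_cases Int_def assms(3))
  finally show ?thesis .
qed

locale reg =
  fixes V :: "'a set" and E :: "'a \<Rightarrow> 'a \<Rightarrow> bool" and r r' :: nat
  assumes g: "graph V E"
    and dE: "\<forall>v\<in>V. degree V E v = r"
    and dC: "\<forall>v\<in>V. degree V (compl V E) v = r'"
    and gE: "gamma_qtR V E + r = card V + 2"
    and gC: "gamma_qtR V (compl V E) + r' = card V + 2"
    and rn: "r + r' + 1 = card V"
begin

lemma fin: "finite V" using g graph_fin by blast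

lemma one_nb:
  assumes v: "v \<in> V" and x: "E v x"
  shows "card {y\<in>{y\<in>V. y \<noteq> v \<and> \<not> E v y}. E x y} \<le> 1"
proof -
  define M where "M = {y\<in>V. y \<noteq> v \<and> \<not> E v y}"
  have cM: "card M = r'" proof -
    have "{u\<in>V. compl V E v u} = M" unfolding M_def compl_def using v by auto
    thus ?thesis using dC v unfolding degree_def by metis
  qed
  have "gamma_qtR V E \<le> 4 + card {y\<in>V. y \<noteq> v \<and> y \<noteq> x \<and> \<not> E v y \<and> \<not> E x y}" by (rule L_edge[OF g x])
  moreover have "{y\<in>V. y \<noteq> v \<and> y \<noteq> x \<and> \<not> E v y \<and> \<not> E x y} = {y\<in>M. \<not> E x y}"
    unfolding M_def using x by auto
  moreover have "card {y\<in>M. E x y} + card {y\<in>M. \<not> E x y} = card M"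
  proof -
    have "finite M" unfolding M_def using fin by auto
    moreover have "M = {y\<in>M. E x y} \<union> {y\<in>M. \<not> E x y}" by auto
    ultimately show ?thesis by (metis (no_types, lifting) card_Un_disjoint disjoint_iff finite_Un mem_Collect_eq)
  qed
  ultimately have "gamma_qtR V E \<le> 4 + card {y\<in>M. \<not> E x y}"
    "card {y\<in>M. E x y} + card {y\<in>M. \<not> E x y} = r'" using cM by simp_all
  thus ?thesis using gE rn unfolding M_def by linarith
qed

lemma common_nb:
  assumes v: "v \<in> V" and u: "u \<in> V" "u \<noteq> v" "\<not> E v u"
  shows "card {y\<in>{y\<in>V. E v y}. E u y} + 1 \<ge> r"
proof -
  have e: "compl V E v u" unfolding compl_def using u v by auto
  have "gamma_qtR V (compl V E) \<le> 4 + card {y\<in>V. y \<noteq> v \<and> y \<noteq> u \<and> \<not> compl V E v y \<and> \<not> compl V E u y}"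
    by (rule L_edge[OF graph_compl[OF g] e])
  moreover have "{y\<in>V. y \<noteq> v \<and> y \<noteq> u \<and> \<not> compl V E v y \<and> \<not> compl V E u y} = {y\<in>{y\<in>V. E v y}. E u y}"
    unfolding compl_def using u v g graphD by fastforce
  ultimately have "gamma_qtR V (compl V E) \<le> 4 + card {y\<in>{y\<in>V. E v y}. E u y}" by simp
  thus ?thesis using gC rn by linarith
qed

lemma r_le: "V \<noteq> {} \<Longrightarrow> r \<ge> r' * (r - 1)"
proof -
  assume "V \<noteq> {}"
  then obtain v where v: "v \<in> V" by blast
  define N where "N = {y\<in>V. E v y}"
  define M where "M = {y\<in>V. y \<noteq> v \<and> \<not> E v y}"
  have cN: "card N = r" using dE v unfolding N_def degree_def by simp
  have cM: "card M = r'" proof -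
    have "{u\<in>V. compl V E v u} = M" unfolding M_def compl_def using v by auto
    thus ?thesis using dC v unfolding degree_def by metis
  qed
  have fN: "finite N" "finite M" unfolding N_def M_def using fin by auto
  have sym: "\<And>x y. E x y \<longleftrightarrow> E y x" using g graphD by metis
  have "(\<Sum>x\<in>N. card {y\<in>M. E x y}) \<le> (\<Sum>x\<in>N. 1)"
    using one_nb[OF v] unfolding N_def M_def by (intro sum_mono) auto
  also have "\<dots> = r" using cN by simp
  finally have A: "(\<Sum>x\<in>N. card {y\<in>M. E x y}) \<le> r" .
  have "(\<Sum>u\<in>M. r - 1) \<le> (\<Sum>u\<in>M. card {y\<in>N. E u y})"
  proof (intro sum_mono)
    fix u assume "u \<in> M"
    hence "card {y\<in>N. E u y} + 1 \<ge> r" using common_nb[OF v] unfolding M_def N_def by auto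
    thus "r - 1 \<le> card {y\<in>N. E u y}" by linarith
  qed
  hence B: "r' * (r - 1) \<le> (\<Sum>u\<in>M. card {y\<in>N. E u y})" using cM by simp
  have "(\<Sum>x\<in>N. card {y\<in>M. E x y}) = (\<Sum>u\<in>M. card {y\<in>N. E u y})"
    by (rule double_count[OF fN sym])
  thus ?thesis using A B by linarith
qed

end

lemma two_eq: "card S = 2 \<Longrightarrow> p \<in> S \<Longrightarrow> q \<in> S \<Longrightarrow> p \<noteq> q \<Longrightarrow> S = {p, q}"
  by (auto simp: card_2_iff)

lemma nbiff: "graph V E \<Longrightarrow> {u\<in>V. E x u} = {p, q} \<Longrightarrow> E x y \<longleftrightarrow> y = p \<or> y = q"
  using graphD by (metis (no_types, lifting) insertCI insertE mem_Collect_eq singletonD)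

lemma C5_struct:
  assumes g: "graph V E" and c: "card V = 5" and d: "\<forall>v\<in>V. degree V E v = 2"
    and P2: "\<forall>v\<in>V. \<forall>u\<in>V. u \<noteq> v \<and> \<not> E v u \<longrightarrow> (\<exists>y. E v y \<and> E u y)"
  shows "graph_iso V E {0..<5} C5"
proof -
  have fin: "finite V" using g graph_fin by blast
  have sym: "\<And>x y. E x y \<Longrightarrow> E y x" and inV: "\<And>x y. E x y \<Longrightarrow> x \<in> V \<and> y \<in> V"
    and irr: "\<And>x. \<not> E x x" using g graphD by metis+
  have dg: "card {u\<in>V. E x u} = 2" if "x \<in> V" for x using d that unfolding degree_def by blast
  obtain v0 where v0: "v0 \<in> V" using c by fastforce
  obtain a b where ab: "{u\<in>V. E v0 u} = {a, b}" "a \<noteq> b" using dg[OF v0] card_2_iff by metis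
  have Ea: "E v0 a" "E v0 b" using ab(1) by blast+
  have abV: "a \<in> V" "b \<in> V" "a \<noteq> v0" "b \<noteq> v0" using inV Ea irr by metis+
  define M where "M = V - {v0, a, b}"
  have cM: "card M = 2" unfolding M_def using c fin v0 abV ab(2) by (simp add: card_Diff_subset)
  obtain c0 d0 where cd: "M = {c0, d0}" "c0 \<noteq> d0" using cM card_2_iff by metis
  have Mprop: "x \<in> V" "x \<noteq> v0" "\<not> E v0 x" "x \<noteq> a" "x \<noteq> b" if "x \<in> M" for x
    using that ab(1) unfolding M_def by auto
  have nab: "\<not> E a b"
  proof
    assume eab: "E a b"
    have Na: "{u\<in>V. E a u} = {v0, b}" by (rule two_eq[OF dg[OF abV(1)]]) (use sym Ea eab abV v0 in auto)
    have Nb: "{u\<in>V. E b u} = {v0, a}" by (rule two_eq[OF dg[OF abV(2)]]) (use sym Ea eab abV v0 in auto)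
    have c0: "c0 \<in> M" using cd by blast
    then obtain y where y: "E v0 y" "E c0 y" using P2 v0 Mprop[OF c0] by metis
    have "y = a \<or> y = b" using y(1) ab(1) inV by blast
    thus False using y(2) sym Na Nb Mprop[OF c0] inV by blast
  qed
  obtain p where Na: "{u\<in>V. E a u} = {v0, p}" "p \<noteq> v0"
  proof -
    obtain s t where st: "{u\<in>V. E a u} = {s, t}" "s \<noteq> t" using dg[OF abV(1)] card_2_iff by metis
    have "v0 \<in> {s,t}" using st(1) sym[OF Ea(1)] v0 by blast
    thus ?thesis using that st by (metis doubleton_eq_iff insertE singletonD)
  qed
  obtain q where Nb: "{u\<in>V. E b u} = {v0, q}" "q \<noteq> v0"
  proof -
    obtain s t where st: "{u\<in>V. E b u} = {s, t}" "s \<noteq> t" using dg[OF abV(2)] card_2_iff by metis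
    have "v0 \<in> {s,t}" using st(1) sym[OF Ea(2)] v0 by blast
    thus ?thesis using that st by (metis doubleton_eq_iff insertE singletonD)
  qed
  have Eap: "E a p" "E b q" using Na Nb by blast+
  have pM: "p \<in> M" using Eap(1) inV irr nab Na(2) Ea abV sym unfolding M_def by (metis DiffI insertE singletonD)
  have qM: "q \<in> M" using Eap(2) inV irr nab Nb(2) Ea abV sym unfolding M_def by (metis DiffI insertE singletonD)
  have pq: "p \<noteq> q"
  proof
    assume pq: "p = q"
    obtain dd where dd: "dd \<in> M" "dd \<noteq> p" using cd by blast
    then obtain y where y: "E v0 y" "E dd y" using P2 v0 Mprop[OF dd(1)] by metis
    have "y = a \<or> y = b" using y(1) ab(1) inV by blast
    thus False using y(2) sym Na Nb Mprop[OF dd(1)] inV dd(2) pq by blast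
  qed
  have M2: "M = {p, q}" using two_eq[OF cM pM qM pq] .
  have Vis: "V = {v0, a, b, p, q}" using M2 v0 abV unfolding M_def by blast
  have Np: "{u\<in>V. E p u} = {a, q}"
  proof -
    obtain s t where st: "{u\<in>V. E p u} = {s, t}" "s \<noteq> t" using dg Mprop(1)[OF pM] card_2_iff by metis
    have "a \<in> {s,t}" using st(1) sym[OF Eap(1)] abV by blast
    moreover have "s \<in> {a, q}" "t \<in> {a, q}"
    proof -
      have "x \<in> {a, q}" if "x \<in> {s,t}" for x
      proof -
        have ex: "E p x" "x \<in> V" using that st(1) by blast+
        have "x \<noteq> v0" using ex Mprop[OF pM] sym by blast
        moreover have "x \<noteq> b" using ex sym Nb pq Mprop[OF pM] by blast
        moreover have "x \<noteq> p" using ex irr by blast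
        ultimately show ?thesis using ex Vis by blast
      qed
      thus "s \<in> {a, q}" "t \<in> {a, q}" by blast+
    qed
    ultimately show ?thesis using st by blast
  qed
  have Nq: "{u\<in>V. E q u} = {b, p}"
  proof -
    obtain s t where st: "{u\<in>V. E q u} = {s, t}" "s \<noteq> t" using dg Mprop(1)[OF qM] card_2_iff by metis
    have "b \<in> {s,t}" using st(1) sym[OF Eap(2)] abV by blast
    moreover have "s \<in> {b, p}" "t \<in> {b, p}"
    proof -
      have "x \<in> {b, p}" if "x \<in> {s,t}" for x
      proof -
        have ex: "E q x" "x \<in> V" using that st(1) by blast+
        have "x \<noteq> v0" using ex Mprop[OF qM] sym by blast
        moreover have "x \<noteq> a" using ex sym Na pq Mprop[OF qM] by blast
        moreover have "x \<noteq> q" using ex irr by blast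
        ultimately show ?thesis using ex Vis by blast
      qed
      thus "s \<in> {b, p}" "t \<in> {b, p}" by blast+
    qed
    ultimately show ?thesis using st by blast
  qed
  have I0: "\<And>y. E v0 y \<longleftrightarrow> y = a \<or> y = b" using nbiff[OF g ab(1)] .
  have I1: "\<And>y. E a y \<longleftrightarrow> y = v0 \<or> y = p" using nbiff[OF g Na(1)] .
  have I4: "\<And>y. E b y \<longleftrightarrow> y = v0 \<or> y = q" using nbiff[OF g Nb(1)] .
  have I2: "\<And>y. E p y \<longleftrightarrow> y = a \<or> y = q" using nbiff[OF g Np] .
  have I3: "\<And>y. E q y \<longleftrightarrow> y = b \<or> y = p" using nbiff[OF g Nq] .
  have ds: "v0 \<noteq> a" "v0 \<noteq> b" "v0 \<noteq> p" "v0 \<noteq> q" "a \<noteq> b" "a \<noteq> p" "a \<noteq> q" "b \<noteq> p" "b \<noteq> q" "p \<noteq> q"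
    using abV ab(2) Mprop[OF pM] Mprop[OF qM] pq by auto
  have "graph_iso V E {0..<length [v0, a, p, q, b]} C5"
  proof (rule iso_from_list)
    show "distinct [v0, a, p, q, b]" using ds by auto
    show "set [v0, a, p, q, b] = V" using Vis by auto
    fix i j assume ij: "i < length [v0, a, p, q, b]" "j < length [v0, a, p, q, b]"
    hence "i \<in> {0,1,2,3,4}" "j \<in> {0,1,2,3,4}" by auto
    thus "E ([v0, a, p, q, b] ! i) ([v0, a, p, q, b] ! j) \<longleftrightarrow> C5 i j"
      using ds ds[symmetric] by (auto simp: I0 I1 I2 I3 I4 C5_def)
  qed
  moreover have "length [v0, a, p, q, b] = 5" by simp
  ultimately show ?thesis by metis
qed

lemma iso_compl:
  assumes "graph_iso V E W F"
  shows "graph_iso V (compl V E) W (compl W F)"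
proof -
  obtain h where h: "bij_betw h V W" "\<forall>u\<in>V. \<forall>v\<in>V. E u v \<longleftrightarrow> F (h u) (h v)"
    using assms unfolding graph_iso_def by blast
  have inj: "inj_on h V" using h(1) bij_betw_def by blast
  have hW: "\<And>u. u \<in> V \<Longrightarrow> h u \<in> W" using h(1) bij_betwE by blast
  have "compl V E u v \<longleftrightarrow> compl W F (h u) (h v)" if "u \<in> V" "v \<in> V" for u v
    unfolding compl_def using that h(2) hW inj by (metis inj_on_eq_iff)
  thus ?thesis unfolding graph_iso_def using h(1) by blast
qed

lemma deg_full:
  assumes g: "graph V E" and y: "y \<in> V"
  shows "degree V E y = card V - 1 \<longleftrightarrow> (\<forall>z\<in>V. z \<noteq> y \<longrightarrow> E y z)"
proof -
  have fin: "finite V" using g graph_fin by blast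
  have s: "{z\<in>V. E y z} \<subseteq> V - {y}" using g graphD by fastforce
  have cV: "card (V - {y}) = card V - 1" using y fin by simp
  show ?thesis
  proof
    assume "degree V E y = card V - 1"
    hence "card {z\<in>V. E y z} = card (V - {y})" using cV unfolding degree_def by simp
    hence "{z\<in>V. E y z} = V - {y}" using card_subset_eq[OF _ s] fin by blast
    thus "\<forall>z\<in>V. z \<noteq> y \<longrightarrow> E y z" by blast
  next
    assume "\<forall>z\<in>V. z \<noteq> y \<longrightarrow> E y z"
    hence "{z\<in>V. E y z} = V - {y}" using s by blast
    thus "degree V E y = card V - 1" using cV unfolding degree_def by simp
  qed
qed

lemma deg_one:
  assumes "{z\<in>V. E y z} = {x}" shows "degree V E y = 1"
  using assms unfolding degree_def by simp

lemma nb_char: "graph V E \<Longrightarrow> {z\<in>V. E y z} = S \<Longrightarrow> E y w \<longleftrightarrow> w \<in> S"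
  using graphD by (metis (no_types, lifting) mem_Collect_eq)

lemma n4_struct:
  assumes g: "graph V E" and c: "card V = 4" and x: "x \<in> V" "\<forall>z\<in>V. z \<noteq> x \<longrightarrow> E x z"
  shows "in_F1 V E \<or> graph_iso V E {0..<4} K4 \<or> graph_iso V E {0..<4} K4_minus_e"
proof -
  have fin: "finite V" using g graph_fin by blast
  have sym: "\<And>x y. E x y \<Longrightarrow> E y x" and inV: "\<And>x y. E x y \<Longrightarrow> x \<in> V \<and> y \<in> V"
    and irr: "\<And>x. \<not> E x x" using g graphD by metis+
  have c3: "card (V - {x}) = 3" using c x fin by simp
  then obtain a b cc where abc: "V - {x} = {a, b, cc}" "a \<noteq> b" "a \<noteq> cc" "b \<noteq> cc"
    using card_3_iff by metis
  have Vis: "V = {x, a, b, cc}" using abc x by blast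
  have xne: "x \<noteq> a" "x \<noteq> b" "x \<noteq> cc" using abc by blast+
  have Ex: "E x a" "E x b" "E x cc" "E a x" "E b x" "E cc x" using x Vis xne sym by auto
  have full: "degree V E y = card V - 1 \<longleftrightarrow> (\<forall>z\<in>V. z \<noteq> y \<longrightarrow> E y z)" if "y \<in> V" for y
    using deg_full[OF g that] .
  show ?thesis
  proof (cases "\<exists>y\<in>V. y \<noteq> x \<and> (\<forall>z\<in>V. z \<noteq> y \<longrightarrow> E y z)")
    case True
    then obtain y where y: "y \<in> V" "y \<noteq> x" "\<forall>z\<in>V. z \<noteq> y \<longrightarrow> E y z" by blast
    have "card (V - {x, y}) = 2" using c x y fin by (simp add: card_Diff_subset)
    then obtain s t where st: "V - {x, y} = {s, t}" "s \<noteq> t" using card_2_iff by metis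
    have Vis2: "V = {x, y, s, t}" using st x y by blast
    have ne: "x \<noteq> s" "x \<noteq> t" "y \<noteq> s" "y \<noteq> t" using st by blast+
    have exy: "E x y" "E x s" "E x t" "E y x" "E y s" "E y t" using x y Vis2 ne by auto
    have "{z\<in>V. E x z} = {y, s, t}" using exy irr Vis2 by auto
    hence Ix: "\<And>w. E x w \<longleftrightarrow> w = y \<or> w = s \<or> w = t" using nb_char[OF g] by blast
    have "{z\<in>V. E y z} = {x, s, t}" using exy irr Vis2 by auto
    hence Iy: "\<And>w. E y w \<longleftrightarrow> w = x \<or> w = s \<or> w = t" using nb_char[OF g] by blast
    have Isx: "E s x" "E s y" "E t x" "E t y" using exy sym by blast+
    show ?thesis
    proof (cases "E s t")
      case True
      have "{z\<in>V. E s z} = {x, y, t}" using Isx True irr Vis2 by auto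
      hence Is: "\<And>w. E s w \<longleftrightarrow> w = x \<or> w = y \<or> w = t" using nb_char[OF g] by blast
      have "{z\<in>V. E t z} = {x, y, s}" using Isx True sym irr Vis2 by auto
      hence It: "\<And>w. E t w \<longleftrightarrow> w = x \<or> w = y \<or> w = s" using nb_char[OF g] by blast
      have "graph_iso V E {0..<length [x, y, s, t]} K4"
      proof (rule iso_from_list)
        show "distinct [x, y, s, t]" using ne y(2) st(2) by auto
        show "set [x, y, s, t] = V" using Vis2 by auto
        fix i j assume ij: "i < length [x, y, s, t]" "j < length [x, y, s, t]"
        hence "i \<in> {0,1,2,3}" "j \<in> {0,1,2,3}" by auto
        thus "E ([x, y, s, t] ! i) ([x, y, s, t] ! j) \<longleftrightarrow> K4 i j"
          using ne ne[symmetric] y(2) st(2) y(2)[symmetric] st(2)[symmetric]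
          by (auto simp: Ix Iy Is It K4_def)
      qed
      thus ?thesis by (simp add: numeral_eq_Suc)
    next
      case False
      have "{z\<in>V. E s z} = {x, y}" using Isx False irr Vis2 by auto
      hence Is: "\<And>w. E s w \<longleftrightarrow> w = x \<or> w = y" using nb_char[OF g] by blast
      have "{z\<in>V. E t z} = {x, y}" using Isx False sym irr Vis2 by auto
      hence It: "\<And>w. E t w \<longleftrightarrow> w = x \<or> w = y" using nb_char[OF g] by blast
      have "graph_iso V E {0..<length [s, t, x, y]} K4_minus_e"
      proof (rule iso_from_list)
        show "distinct [s, t, x, y]" using ne y(2) st(2) by auto
        show "set [s, t, x, y] = V" using Vis2 by auto
        fix i j assume ij: "i < length [s, t, x, y]" "j < length [s, t, x, y]"
        hence "i \<in> {0,1,2,3}" "j \<in> {0,1,2,3}" by auto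
        thus "E ([s, t, x, y] ! i) ([s, t, x, y] ! j) \<longleftrightarrow> K4_minus_e i j"
          using ne ne[symmetric] y(2) st(2) y(2)[symmetric] st(2)[symmetric]
          by (auto simp: Ix Iy Is It K4_minus_e_def K4_def doubleton_eq_iff)
      qed
      thus ?thesis by (simp add: numeral_eq_Suc)
    qed
  next
    case False
    have uniq: "{v\<in>V. degree V E v = card V - 1} = {x}"
      using False full x by auto
    have aV: "a \<in> V" "b \<in> V" "cc \<in> V" using Vis by auto
    have na: "\<not> (E a b \<and> E a cc)"
    proof
      assume h: "E a b \<and> E a cc"
      hence "\<forall>z\<in>V. z \<noteq> a \<longrightarrow> E a z" using Ex Vis by auto
      thus False using False aV xne by metis
    qed
    have nb: "\<not> (E b a \<and> E b cc)"
    proof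
      assume h: "E b a \<and> E b cc"
      hence "\<forall>z\<in>V. z \<noteq> b \<longrightarrow> E b z" using Ex Vis by auto
      thus False using False aV xne by metis
    qed
    have nc: "\<not> (E cc a \<and> E cc b)"
    proof
      assume h: "E cc a \<and> E cc b"
      hence "\<forall>z\<in>V. z \<noteq> cc \<longrightarrow> E cc z" using Ex Vis by auto
      thus False using False aV xne by metis
    qed
    have "\<exists>v\<in>V. degree V E v = 1"
    proof -
      have "{z\<in>V. E a z} = {x}" if "\<not> E a b" "\<not> E a cc" using that Vis Ex irr by auto
      moreover have "{z\<in>V. E b z} = {x}" if "\<not> E b a" "\<not> E b cc" using that Vis Ex irr by auto
      moreover have "{z\<in>V. E cc z} = {x}" if "\<not> E cc a" "\<not> E cc b" using that Vis Ex irr by auto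
      ultimately show ?thesis using na nb nc sym aV deg_one by metis
    qed
    thus ?thesis unfolding in_F1_def using uniq by simp
  qed
qed

lemma univ_iso:
  assumes g: "graph V E" and x: "x \<in> V" "degree V E x = card V - 1"
  shows "\<forall>u. \<not> compl V E x u"
  using deg_full[OF g x(1)] x unfolding compl_def by auto

lemma gam_ge3: "graph V E \<Longrightarrow> card V \<ge> 4 \<Longrightarrow> gamma_qtR V E \<ge> 3"
proof -
  assume g: "graph V E" and c: "card V \<ge> 4"
  obtain f where f: "qtrdf V E f" "gamma_qtR V E = weight V f" using gamma_attained by blast
  show ?thesis using L_ge3[OF g _ f(1)] c f(2) by simp
qed

lemma gam_ge4_nouniv:
  assumes g: "graph V E" and c: "card V \<ge> 4" and nu: "\<not> (\<exists>x\<in>V. degree V E x = card V - 1)"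
  shows "gamma_qtR V E \<ge> 4"
proof -
  obtain f where f: "qtrdf V E f" "gamma_qtR V E = weight V f" using gamma_attained by blast
  show ?thesis
  proof (rule ccontr)
    assume "\<not> ?thesis"
    hence "weight V f \<le> 3" using f by simp
    thus False using L_3univ[OF g c f(1)] nu by blast
  qed
qed

lemma gam_iso4:
  assumes g: "graph V E" and c: "card V \<ge> 4" and w: "w \<in> V" "\<forall>u. \<not> E w u"
  shows "gamma_qtR V E \<ge> 4"
  using gamma_attained[of V E] L_iso4[OF g c _ w] by metis

lemma low7:
  assumes g: "graph V E" and c: "card V \<ge> 4"
  shows "7 \<le> gamma_qtR V E + gamma_qtR V (compl V E)"
    "gamma_qtR V E + gamma_qtR V (compl V E) = 7 \<Longrightarrow>
      ((\<exists>x\<in>V. degree V E x = card V - 1) \<and> gamma_qtR V (compl V E) \<le> 4) \<or>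
      ((\<exists>x\<in>V. degree V (compl V E) x = card V - 1) \<and> gamma_qtR V E \<le> 4)"
proof -
  have gc: "graph V (compl V E)" using graph_compl[OF g] .
  have cc: "compl V (compl V E) = E" using compl_compl[OF g] .
  have A: "gamma_qtR V E \<ge> 3" "gamma_qtR V (compl V E) \<ge> 3" using gam_ge3 g gc c by blast+
  have B: "gamma_qtR V (compl V E) \<ge> 4" if ex: "\<exists>x\<in>V. degree V E x = card V - 1"
  proof -
    obtain x where "x \<in> V" "degree V E x = card V - 1" using ex by blast
    from univ_iso[OF g this] show ?thesis using gam_iso4[OF gc c \<open>x \<in> V\<close>] by blast
  qed
  have B': "gamma_qtR V E \<ge> 4" if ex: "\<exists>x\<in>V. degree V (compl V E) x = card V - 1"
  proof -
    obtain x where "x \<in> V" "degree V (compl V E) x = card V - 1" using ex by blast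
    from univ_iso[OF gc this] have "\<forall>u. \<not> E x u" using cc by simp
    thus ?thesis using gam_iso4[OF g c \<open>x \<in> V\<close>] by blast
  qed
  have C: "gamma_qtR V E \<ge> 4" "gamma_qtR V (compl V E) \<ge> 4"
    if "\<not> (\<exists>x\<in>V. degree V E x = card V - 1)" "\<not> (\<exists>x\<in>V. degree V (compl V E) x = card V - 1)"
    using that gam_ge4_nouniv[OF g c] gam_ge4_nouniv[OF gc c] by blast+
  show "7 \<le> gamma_qtR V E + gamma_qtR V (compl V E)"
  proof (cases "\<exists>x\<in>V. degree V E x = card V - 1")
    case True thus ?thesis using A B by linarith
  next
    case F1: False
    show ?thesis
    proof (cases "\<exists>x\<in>V. degree V (compl V E) x = card V - 1")
      case True thus ?thesis using A B' by linarith
    next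
      case False thus ?thesis using C[OF F1 False] by linarith
    qed
  qed
  assume s7: "gamma_qtR V E + gamma_qtR V (compl V E) = 7"
  show "((\<exists>x\<in>V. degree V E x = card V - 1) \<and> gamma_qtR V (compl V E) \<le> 4) \<or>
      ((\<exists>x\<in>V. degree V (compl V E) x = card V - 1) \<and> gamma_qtR V E \<le> 4)"
  proof (cases "\<exists>x\<in>V. degree V E x = card V - 1")
    case True thus ?thesis using A s7 by auto
  next
    case F1: False
    show ?thesis
    proof (cases "\<exists>x\<in>V. degree V (compl V E) x = card V - 1")
      case True thus ?thesis using A s7 by auto
    next
      case False thus ?thesis using C[OF F1 False] s7 by linarith
    qed
  qed
qed

lemma RHS_from_univ:
  assumes g: "graph V E" and c: "card V \<ge> 4" and x: "x \<in> V" "degree V E x = card V - 1"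
    and le: "gamma_qtR V (compl V E) \<le> 4"
  shows "in_F1 V E \<or> graph_iso V E {0..<4} K4 \<or> graph_iso V E {0..<4} K4_minus_e"
proof (cases "card V = 4")
  case True
  thus ?thesis using n4_struct[OF g True x(1)] deg_full[OF g x(1)] x by blast
next
  case False
  hence c5: "card V \<ge> 5" using c by simp
  have gc: "graph V (compl V E)" using graph_compl[OF g] .
  obtain f where f: "qtrdf V (compl V E) f" "gamma_qtR V (compl V E) = weight V f" using gamma_attained by blast
  have uniq: "{v\<in>V. degree V E v = card V - 1} = {x}"
  proof -
    have "y = x" if y: "y \<in> V" "degree V E y = card V - 1" for y
    proof (rule ccontr)
      assume "y \<noteq> x"
      hence "weight V f \<ge> 5" using L_two_iso[OF gc c5 f(1) x(1) univ_iso[OF g x] y(1) univ_iso[OF g y]] by simp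
      thus False using f le by simp
    qed
    thus ?thesis using x by blast
  qed
  obtain z where z: "z \<in> V" "degree V (compl V E) z = card V - 2"
    using L_w4[OF gc c5 f(1) _ x(1) univ_iso[OF g x]] f le by auto
  have "degree V E z = 1" using degree_compl[OF g z(1)] z c5 by simp
  thus ?thesis unfolding in_F1_def using uniq z by auto
qed

lemma le7_univ:
  assumes g: "graph V E" and c: "card V \<ge> 4" and x: "x \<in> V" "degree V E x = card V - 1"
    and o: "card V = 4 \<or> (\<exists>y\<in>V. degree V E y = 1)"
  shows "gamma_qtR V E + gamma_qtR V (compl V E) \<le> 7"
proof -
  have gc: "graph V (compl V E)" using graph_compl[OF g] .
  have g3: "gamma_qtR V E \<le> 3" using L_univ_le3[OF g x] c by simp
  have "gamma_qtR V (compl V E) \<le> 4"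
  proof (cases "card V = 4")
    case True thus ?thesis using gamma_le_n[of V "compl V E"] by simp
  next
    case False
    then obtain y where y: "y \<in> V" "degree V E y = 1" using o by blast
    have yx: "y \<noteq> x" using x y c by auto
    have full: "\<forall>z\<in>V. z \<noteq> x \<longrightarrow> E x z" using deg_full[OF g x(1)] x(2) by blast
    have Eyx: "E y x" using full y yx g graphD by metis
    have "{z\<in>V. E y z} = {x}"
    proof -
      have "x \<in> {z\<in>V. E y z}" using Eyx x by blast
      moreover have "card {z\<in>V. E y z} = 1" using y unfolding degree_def by simp
      ultimately show ?thesis by (metis card_1_singletonE singletonD)
    qed
    hence "{z\<in>V. compl V E y z} = V - {y, x}" unfolding compl_def using y by auto
    thus ?thesis using L_deg1_le4[OF gc y(1) x(1) yx] c by simp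
  qed
  thus ?thesis using g3 by simp
qed

lemma upper:
  assumes g: "graph V E" and c: "card V \<ge> 4"
  shows "gamma_qtR V E + gamma_qtR V (compl V E) \<le> card V + 5"
    "gamma_qtR V E + gamma_qtR V (compl V E) = card V + 5 \<Longrightarrow> \<exists>r r'. reg V E r r'"
proof -
  have gc: "graph V (compl V E)" using graph_compl[OF g] .
  have fin: "finite V" using g graph_fin by blast
  have ne: "V \<noteq> {}" using c by auto
  have dc: "\<And>v. v \<in> V \<Longrightarrow> degree V (compl V E) v + degree V E v = card V - 1" using degree_compl[OF g] by blast
  have "(gamma_qtR V E + gamma_qtR V (compl V E) \<le> card V + 5) \<and>
        (gamma_qtR V E + gamma_qtR V (compl V E) = card V + 5 \<longrightarrow> (\<exists>r r'. reg V E r r'))"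
  proof (cases "\<forall>v\<in>V. degree V E v = 0")
    case True
    obtain v where v: "v \<in> V" using ne by blast
    have "degree V (compl V E) v = card V - 1" using dc[OF v] True v by simp
    hence "gamma_qtR V (compl V E) \<le> 3" using L_univ_le3[OF gc v] c by simp
    thus ?thesis using gamma_le_n[of V E] by simp
  next
    case F1: False
    show ?thesis
    proof (cases "\<forall>v\<in>V. degree V (compl V E) v = 0")
      case True
      obtain v where v: "v \<in> V" using ne by blast
      have "degree V E v = card V - 1" using dc[OF v] True v by simp
      hence "gamma_qtR V E \<le> 3" using L_univ_le3[OF g v] c by simp
      thus ?thesis using gamma_le_n[of V "compl V E"] by simp
    next
      case False
      define D where "D = degree V E ` V"
      have fD: "finite D" "D \<noteq> {}" unfolding D_def using fin ne by auto
      obtain x where x: "x \<in> V" "degree V E x = Max D" using Max_in[OF fD] unfolding D_def by auto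
      obtain y where y: "y \<in> V" "degree V E y = Min D" using Min_in[OF fD] unfolding D_def by auto
      have mx: "\<And>v. v \<in> V \<Longrightarrow> degree V E v \<le> degree V E x" using x fD unfolding D_def by simp
      have mn: "\<And>v. v \<in> V \<Longrightarrow> degree V E y \<le> degree V E v" using y fD unfolding D_def by simp
      obtain x1 where x1: "x1 \<in> V" "degree V E x1 \<noteq> 0" using F1 by blast
      obtain z where z: "z \<in> V" "degree V (compl V E) z \<noteq> 0" using False by blast
      have dx: "degree V E x \<ge> 1" using mx[OF x1(1)] x1 by simp
      have dy: "degree V (compl V E) y \<ge> 1" using dc[OF y(1)] dc[OF z(1)] mn[OF z(1)] z by simp
      have U1: "gamma_qtR V E + degree V E x \<le> card V + 2" using L_U2[OF g x(1) dx] .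
      have U2: "gamma_qtR V (compl V E) + degree V (compl V E) y \<le> card V + 2" using L_U2[OF gc y(1) dy] .
      have S: "gamma_qtR V E + gamma_qtR V (compl V E) + (degree V E x - degree V E y) \<le> card V + 5"
        using U1 U2 dc[OF y(1)] mn[OF x(1)] c by linarith
      have eq: "\<exists>r r'. reg V E r r'" if s5: "gamma_qtR V E + gamma_qtR V (compl V E) = card V + 5"
      proof -
        define r where "r = degree V E x"
        define r' where "r' = card V - 1 - r"
        have xy: "degree V E x = degree V E y" using S s5 mn[OF x(1)] by linarith
        have dE: "\<forall>v\<in>V. degree V E v = r" unfolding r_def using mx mn xy by (metis le_antisym)
        have rle: "r \<le> card V - 1" using dc[OF x(1)] unfolding r_def by linarith
        have dC: "\<forall>v\<in>V. degree V (compl V E) v = r'" unfolding r'_def using dE dc by (metis add_diff_cancel_right')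
        have "reg V E r r'"
        proof
          show "graph V E" by (rule g)
          show "\<forall>v\<in>V. degree V E v = r" by (rule dE)
          show "\<forall>v\<in>V. degree V (compl V E) v = r'" by (rule dC)
          show "gamma_qtR V E + r = card V + 2" using U1 U2 s5 xy dc[OF y(1)] unfolding r_def by linarith
          show "gamma_qtR V (compl V E) + r' = card V + 2" using U1 U2 s5 xy dc[OF y(1)] dC y(1) unfolding r_def by fastforce
          show "r + r' + 1 = card V" unfolding r'_def using rle c by linarith
        qed
        thus ?thesis by blast
      qed
      have "gamma_qtR V E + gamma_qtR V (compl V E) \<le> card V + 5" using S by linarith
      thus ?thesis using eq by blast
    qed
  qed
  thus "gamma_qtR V E + gamma_qtR V (compl V E) \<le> card V + 5"
    "gamma_qtR V E + gamma_qtR V (compl V E) = card V + 5 \<Longrightarrow> \<exists>r r'. reg V E r r'" by blast+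
qed

lemma reg_C5:
  assumes "reg V E r r'" and c: "card V \<ge> 4"
  shows "graph_iso V E {0..<5} C5"
proof -
  interpret reg V E r r' by (rule assms)
  have r2: "r \<ge> 2" using gE gamma_le_n[of V E] by linarith
  have r2': "r' \<ge> 2" using gC gamma_le_n[of V "compl V E"] by linarith
  have ne: "V \<noteq> {}" using c by auto
  have le: "r' * (r - 1) \<le> r" using r_le[OF ne] .
  have "2 * (r - 1) \<le> r' * (r - 1)" using r2' by (intro mult_right_mono) auto
  hence rr: "r = 2" using le r2 by linarith
  hence "r' \<le> 2" using le by simp
  hence rr': "r' = 2" using r2' by simp
  have c5: "card V = 5" using rn rr rr' by simp
  have P2: "\<forall>v\<in>V. \<forall>u\<in>V. u \<noteq> v \<and> \<not> E v u \<longrightarrow> (\<exists>y. E v y \<and> E u y)"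
  proof (intro ballI impI)
    fix v u assume vu: "v \<in> V" "u \<in> V" "u \<noteq> v \<and> \<not> E v u"
    have "card {y\<in>{y\<in>V. E v y}. E u y} \<ge> 1" using common_nb[OF vu(1,2)] vu(3) rr by fastforce
    hence "{y\<in>{y\<in>V. E v y}. E u y} \<noteq> {}" by (metis card.empty not_one_le_zero)
    thus "\<exists>y. E v y \<and> E u y" by blast
  qed
  show ?thesis using C5_struct[OF g c5 _ P2] dE rr by blast
qed

lemma C5_sum:
  assumes g: "graph V E" and iso: "graph_iso V E {0..<5} C5"
  shows "gamma_qtR V E + gamma_qtR V (compl V E) \<ge> card V + 5"
proof -
  have c: "card V = 5" using iso_card[OF iso] by simp
  have dE: "\<forall>v\<in>V. degree V E v = 2" using iso_all_deg[OF iso deg_C5] .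
  have dC: "\<forall>v\<in>V. degree V (compl V E) v = 2" using degree_compl[OF g] dE c by fastforce
  have "card V \<le> gamma_qtR V E" using L_low_gamma[OF g] dE by simp
  moreover have "card V \<le> gamma_qtR V (compl V E)" using L_low_gamma[OF graph_compl[OF g]] dC by simp
  ultimately show ?thesis using c by simp
qed

theorem mainTheorem10:
  fixes V :: "'a set" and E :: "'a \<Rightarrow> 'a \<Rightarrow> bool"
  assumes "graph V E" and "card V \<ge> 4"
  shows "7 \<le> gamma_qtR V E + gamma_qtR V (compl V E)
       \<and> gamma_qtR V E + gamma_qtR V (compl V E) \<le> card V + 5
       \<and> (gamma_qtR V E + gamma_qtR V (compl V E) = 7 \<longleftrightarrow>
            graph_iso V E {0..<4} K4 \<or>
            graph_iso V E {0..<4} (compl {0..<4} K4) \<or>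
            graph_iso V E {0..<4} K4_minus_e \<or>
            graph_iso V E {0..<4} (compl {0..<4} K4_minus_e) \<or>
            in_F1 V E \<or> in_F1' V E)
       \<and> (gamma_qtR V E + gamma_qtR V (compl V E) = card V + 5 \<longleftrightarrow>
            graph_iso V E {0..<5} C5)"
proof -
  note g = assms(1) and c = assms(2)
  have gc: "graph V (compl V E)" using graph_compl[OF g] .
  have cc: "compl V (compl V E) = E" using compl_compl[OF g] .
  have L7: "7 \<le> gamma_qtR V E + gamma_qtR V (compl V E)" using low7(1)[OF g c] .
  have U: "gamma_qtR V E + gamma_qtR V (compl V E) \<le> card V + 5" using upper(1)[OF g c] .
  have sw: "gamma_qtR V (compl V E) + gamma_qtR V (compl V (compl V E)) = gamma_qtR V E + gamma_qtR V (compl V E)"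
    using cc by simp
  have fwd: "graph_iso V E {0..<4} K4 \<or>
            graph_iso V E {0..<4} (compl {0..<4} K4) \<or>
            graph_iso V E {0..<4} K4_minus_e \<or>
            graph_iso V E {0..<4} (compl {0..<4} K4_minus_e) \<or>
            in_F1 V E \<or> in_F1' V E" if s7: "gamma_qtR V E + gamma_qtR V (compl V E) = 7"
  proof -
    from low7(2)[OF g c s7] show ?thesis
    proof
      assume "(\<exists>x\<in>V. degree V E x = card V - 1) \<and> gamma_qtR V (compl V E) \<le> 4"
      then obtain x where "x \<in> V" "degree V E x = card V - 1" "gamma_qtR V (compl V E) \<le> 4" by blast
      from RHS_from_univ[OF g c this] show ?thesis by blast
    next
      assume "(\<exists>x\<in>V. degree V (compl V E) x = card V - 1) \<and> gamma_qtR V E \<le> 4"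
      then obtain x where x: "x \<in> V" "degree V (compl V E) x = card V - 1" "gamma_qtR V (compl V (compl V E)) \<le> 4"
        using cc by auto
      from RHS_from_univ[OF gc c x]
      have "in_F1 V (compl V E) \<or> graph_iso V (compl V E) {0..<4} K4 \<or> graph_iso V (compl V E) {0..<4} K4_minus_e" .
      thus ?thesis unfolding in_F1'_def using iso_compl[of V "compl V E"] cc by metis
    qed
  qed
  have bwd: "gamma_qtR V E + gamma_qtR V (compl V E) \<le> 7" if h: "graph_iso V E {0..<4} K4 \<or>
            graph_iso V E {0..<4} (compl {0..<4} K4) \<or>
            graph_iso V E {0..<4} K4_minus_e \<or>
            graph_iso V E {0..<4} (compl {0..<4} K4_minus_e) \<or>
            in_F1 V E \<or> in_F1' V E"
  proof -
    have uE: "gamma_qtR V E + gamma_qtR V (compl V E) \<le> 7"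
      if "x \<in> V" "degree V E x = card V - 1" "card V = 4 \<or> (\<exists>y\<in>V. degree V E y = 1)" for x
      using le7_univ[OF g c that] .
    have uC: "gamma_qtR V E + gamma_qtR V (compl V E) \<le> 7"
      if "x \<in> V" "degree V (compl V E) x = card V - 1" "card V = 4 \<or> (\<exists>y\<in>V. degree V (compl V E) y = 1)" for x
      using le7_univ[OF gc c that] sw by simp
    have z0: "gamma_qtR V E + gamma_qtR V (compl V E) \<le> 7" if "x \<in> V" "degree V E x = 0" "card V = 4" for x
      using uC[of x] that degree_compl[OF g that(1)] by simp
    show ?thesis using h
    proof (elim disjE)
      assume i: "graph_iso V E {0..<4} K4"
      have c4: "card V = 4" using iso_card[OF i] by simp
      obtain x where "x \<in> V" "degree V E x = 3" using iso_has_deg[OF i _ deg_K4] by auto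
      thus ?thesis using uE c4 by simp
    next
      assume i: "graph_iso V E {0..<4} K4_minus_e"
      have c4: "card V = 4" using iso_card[OF i] by simp
      obtain x where "x \<in> V" "degree V E x = 3" using iso_has_deg[OF i _ deg_K4e] by auto
      thus ?thesis using uE c4 by simp
    next
      assume i: "graph_iso V E {0..<4} (compl {0..<4} K4)"
      have c4: "card V = 4" using iso_card[OF i] by simp
      obtain x where "x \<in> V" "degree V E x = 0" using iso_has_deg[OF i _ deg_cK4] by auto
      thus ?thesis using z0 c4 by simp
    next
      assume i: "graph_iso V E {0..<4} (compl {0..<4} K4_minus_e)"
      have c4: "card V = 4" using iso_card[OF i] by simp
      obtain x where "x \<in> V" "degree V E x = 0" using iso_has_deg[OF i _ deg_cK4e] by auto
      thus ?thesis using z0 c4 by simp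
    next
      assume i: "in_F1 V E"
      have "{v\<in>V. degree V E v = card V - 1} \<noteq> {}" using i unfolding in_F1_def by (metis card.empty zero_neq_one)
      then obtain x where "x \<in> V" "degree V E x = card V - 1" by blast
      thus ?thesis using uE i unfolding in_F1_def by blast
    next
      assume i: "in_F1' V E"
      hence i': "in_F1 V (compl V E)" unfolding in_F1'_def .
      have "{v\<in>V. degree V (compl V E) v = card V - 1} \<noteq> {}" using i' unfolding in_F1_def by (metis card.empty zero_neq_one)
      then obtain x where "x \<in> V" "degree V (compl V E) x = card V - 1" by blast
      thus ?thesis using uC i' unfolding in_F1_def by blast
    qed
  qed
  have P7: "(gamma_qtR V E + gamma_qtR V (compl V E) = 7 \<longleftrightarrow>
            graph_iso V E {0..<4} K4 \<or>
            graph_iso V E {0..<4} (compl {0..<4} K4) \<or>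
            graph_iso V E {0..<4} K4_minus_e \<or>
            graph_iso V E {0..<4} (compl {0..<4} K4_minus_e) \<or>
            in_F1 V E \<or> in_F1' V E)"
    using fwd bwd L7 by (meson le_antisym)
  have P5: "gamma_qtR V E + gamma_qtR V (compl V E) = card V + 5 \<longleftrightarrow> graph_iso V E {0..<5} C5"
  proof
    assume "gamma_qtR V E + gamma_qtR V (compl V E) = card V + 5"
    then obtain r r' where "reg V E r r'" using upper(2)[OF g c] by blast
    thus "graph_iso V E {0..<5} C5" using reg_C5 c by blast
  next
    assume "graph_iso V E {0..<5} C5"
    thus "gamma_qtR V E + gamma_qtR V (compl V E) = card V + 5" using C5_sum[OF g] U by (meson le_antisym)
  qed
  show ?thesis using L7 U P7 P5 by blast
qed

end
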